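(* Let $S\subseteq[n]$ and $k\in S$. Suppose $\delta_i=0$ for $i\notin S$, and the vectors $\{\delta_j: j\in S\setminus\{k\}\}$ are random with a joint distribution $\mathcal{D}_k$ having finite first and second moments, while $\delta_k\in\mathbb{R}^n$ is deterministic. Let $(W',P')$ be the (random) stable point for $M'=M+\Delta$, where $\Delta e_i=\delta_i$. Then a vector $\delta_k\in\mathbb{R}^n$ maximizes agent $k$'s expected utility $\mathbb{E}_{\mathcal{D}_k}[g_k(W',P')]$ if and only if it solves the linear system $$T^{(k,k)}\delta_k+\sum_{j\in S,\ j\neq k}T^{(k,j)}\,\mathbb{E}_{\mathcal{D}_k}[\delta_j]=y_k .$$
   Context: Fix agents $[n]=\{1,\dots,n\}$. Let $\Sigma\in\mathbb{R}^{n\times n}$ be symmetric positive definite, $\Gamma=\mathrm{diag}(\gamma_1,\dots,\gamma_n)$ with all $\gamma_i>0$, and let $M\in\mathbb{R}^{n\times n}$ be the matrix of true beliefs with $i$-th column $\mu_i=Me_i$. For a matrix of reported negotiating positions $M'\in\mathbb{R}^{n\times n}$, the stable point for $M'$ is the unique pair $(W,P)$ of real $n\times n$ matrices with $W=W^T$, $P^T=-P$ and $M'-P=2\Sigma W\Gamma$; equivalently $\mathrm{vec}(W)=\tfrac12(\Gamma\otimes\Sigma+\Sigma\otimes\Gamma)^{-1}\mathrm{vec}(M'+M'^T)$ and $P=M'-2\Sigma W\Gamma$. Here $\mathrm{vec}$ stacks columns and $e_i$ is the $i$-th standard basis vector. Agent $i$'s (true) utility at $(W,P)$ is $g_i(W,P)=w_i^T(\mu_i-Pe_i)-\gamma_i\,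 w_i^T\Sigma w_i$, where $w_i=We_i$. Agent $i$'s negotiating position is $\mu_i'=\mu_i+\delta_i$. Matrices: $\Pi\in\mathbb{R}^{n^2\times n^2}$ is the commutation matrix, $\Pi\,\mathrm{vec}(X)=\mathrm{vec}(X^T)$ for all $X\in\mathbb{R}^{n\times n}$; $\Pi_k\in\mathbb{R}^{n\times n^2}$ satisfies $\Pi_k\mathrm{vec}(X)=Xe_k$. For $Z\in\mathbb{R}^{n^2\times n^2}$, $Z^{(p,q)}$ is its $n\times n$ block in block-row $p$ and block-column $q$. Set $K=\Gamma\otimes\Sigma+\Sigma\otimes\Gamma$ (invertible), $L=\tfrac12(K^{-1}+K^{-1}\Pi)$, $T^{(k,k)}=L^{(k,k)}+(L^{(k,k)})^T-2\gamma_k(L^{(k,k)})^T\Sigma L^{(k,k)}$, $T^{(k,j)}=(I-2\gamma_k(L^{(k,k)})^T\Sigma)L^{(k,j)}$ for $j\neq k$, and $y_k=\tfrac12\big(2\gamma_k(L^{(k,k)})^T\Sigma-I\big)\Pi_kK^{-1}\mathrm{vec}(M+M^T)$. *)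

theory Defs
  imports "HOL-Analysis.Analysis" "HOL-Probability.Probability"
begin

text \<open>Agents are indexed by a finite type 'n (so n = CARD('n)); n x n matrices are
  real^'n^'n; vectors in R^(n^2) are indexed by pairs 'n \<times> 'n, where the pair (i,p)
  stands for row i of column p (column stacking).\<close>

definition diagm :: "('n::finite \<Rightarrow> real) \<Rightarrow> real^'n^'n" where
  "diagm g = (\<chi> i j. if i = j then g i else 0)"

definition vecm :: "real^'n^'n \<Rightarrow> real^('n::finite \<times> 'n)" where
  "vecm X = (\<chi> ip. X $ fst ip $ snd ip)"

text \<open>Kronecker product: block (p,q) of A \<otimes> B is A(p,q) B.\<close>
definition kron :: "real^'n^'n \<Rightarrow> real^'n^'n \<Rightarrow> real^('n::finite \<times> 'n)^('n \<times> 'n)" where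
  "kron A B = (\<chi> ip jq. A $ snd ip $ snd jq * B $ fst ip $ fst jq)"

text \<open>Commutation matrix: Pi *v vecm X = vecm (transpose X).\<close>
definition commut :: "real^('n::finite \<times> 'n)^('n \<times> 'n)" where
  "commut = (\<chi> ip jq. if fst ip = snd jq \<and> snd ip = fst jq then 1 else 0)"

text \<open>Pi_k: Pi_k *v vecm X = column k X (= X e_k).\<close>
definition commut_k :: "'n \<Rightarrow> real^('n::finite \<times> 'n)^'n" where
  "commut_k k = (\<chi> i jq. if jq = (i, k) then 1 else 0)"

definition blk :: "real^('n::finite \<times> 'n)^('n \<times> 'n) \<Rightarrow> 'n \<Rightarrow> 'n \<Rightarrow> real^'n^'n" where
  "blk Z p q = (\<chi> i j. Z $ (i, p) $ (j, q))"

definition Kmat :: "real^'n^'n \<Rightarrow> ('n::finite \<Rightarrow> real) \<Rightarrow> real^('n \<times> 'n)^('n \<times> 'n)" where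
  "Kmat \<Sigma> \<gamma> = kron (diagm \<gamma>) \<Sigma> + kron \<Sigma> (diagm \<gamma>)"

definition Lmat :: "real^'n^'n \<Rightarrow> ('n::finite \<Rightarrow> real) \<Rightarrow> real^('n \<times> 'n)^('n \<times> 'n)" where
  "Lmat \<Sigma> \<gamma> = (1/2) *\<^sub>R (matrix_inv (Kmat \<Sigma> \<gamma>) + matrix_inv (Kmat \<Sigma> \<gamma>) ** commut)"

definition Tblk :: "real^'n^'n \<Rightarrow> ('n::finite \<Rightarrow> real) \<Rightarrow> 'n \<Rightarrow> 'n \<Rightarrow> real^'n^'n" where
  "Tblk \<Sigma> \<gamma> k j =
     (let Lkk = blk (Lmat \<Sigma> \<gamma>) k k in
      if j = k then Lkk + transpose Lkk - (2 * \<gamma> k) *\<^sub>R (transpose Lkk ** \<Sigma> ** Lkk)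
      else (mat 1 - (2 * \<gamma> k) *\<^sub>R (transpose Lkk ** \<Sigma>)) ** blk (Lmat \<Sigma> \<gamma>) k j)"

definition yvec :: "real^'n^'n \<Rightarrow> ('n::finite \<Rightarrow> real) \<Rightarrow> real^'n^'n \<Rightarrow> 'n \<Rightarrow> real^'n" where
  "yvec \<Sigma> \<gamma> M k =
     (let Lkk = blk (Lmat \<Sigma> \<gamma>) k k in
      (1/2) *\<^sub>R (((2 * \<gamma> k) *\<^sub>R (transpose Lkk ** \<Sigma>) - mat 1)
        *v (commut_k k *v (matrix_inv (Kmat \<Sigma> \<gamma>) *v vecm (M + transpose M)))))"

definition stable_point :: "real^'n^'n \<Rightarrow> ('n::finite \<Rightarrow> real) \<Rightarrow> real^'n^'n
    \<Rightarrow> (real^'n^'n) \<times> (real^'n^'n)" where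
  "stable_point \<Sigma> \<gamma> M' = (THE (W, P). transpose W = W \<and> transpose P = - P \<and>
      M' - P = 2 *\<^sub>R (\<Sigma> ** W ** diagm \<gamma>))"

definition utility :: "real^'n^'n \<Rightarrow> ('n::finite \<Rightarrow> real) \<Rightarrow> real^'n^'n \<Rightarrow> 'n
    \<Rightarrow> (real^'n^'n) \<times> (real^'n^'n) \<Rightarrow> real" where
  "utility \<Sigma> \<gamma> M i WP = (let W = fst WP; P = snd WP; w = column i W in
      w \<bullet> (column i M - column i P) - \<gamma> i * (w \<bullet> (\<Sigma> *v w)))"

definition devmat :: "'n set \<Rightarrow> 'n \<Rightarrow> ('n \<Rightarrow> 'a \<Rightarrow> real^'n) \<Rightarrow> real^'n \<Rightarrow> 'a
    \<Rightarrow> real^'n^('n::finite)" where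
  "devmat S k D d \<omega> = (\<chi> r i. if i = k then d $ r else if i \<in> S then D i \<omega> $ r else 0)"

definition expected_utility :: "'a measure \<Rightarrow> real^'n^'n \<Rightarrow> ('n::finite \<Rightarrow> real)
    \<Rightarrow> real^'n^'n \<Rightarrow> 'n set \<Rightarrow> 'n \<Rightarrow> ('n \<Rightarrow> 'a \<Rightarrow> real^'n) \<Rightarrow> real^'n \<Rightarrow> real" where
  "expected_utility \<Omega> \<Sigma> \<gamma> M S k D d =
     integral\<^sup>L \<Omega> (\<lambda>\<omega>. utility \<Sigma> \<gamma> M k (stable_point \<Sigma> \<gamma> (M + devmat S k D d \<omega>)))"

end

theory Submission
  imports Defs
begin
lemma ifmul: "(if P then a else 0) * (b::real) = (if P then a * b else 0)" by simp
lemma ifmul2: "(b::real) * (if P then a else 0) = (if P then b * a else 0)" by simp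
lemma ifconj0: "(if A \<and> B then (x::real) else 0) = (if A then (if B then x else 0) else 0)" by simp

lemma mm_entry: "((A::real^'n::finite^'m) ** (B::real^'p^'n)) $ i $ j = (\<Sum>l\<in>UNIV. A$i$l * B$l$j)"
  by (simp add: matrix_matrix_mult_def)

lemma mv_entry: "((A::real^'n::finite^'m) *v x) $ i = (\<Sum>l\<in>UNIV. A$i$l * x$l)"
  by (simp add: matrix_vector_mult_def)

lemma diagm_entry: "(diagm g :: real^'n::finite^'n) $ i $ j = (if i = j then g i else 0)"
  by (simp add: diagm_def)

lemma mul_diagm: "((X::real^'n::finite^'n) ** diagm g) $ i $ j = X$i$j * g j"
  by (simp add: mm_entry diagm_entry ifmul ifmul2 ifconj0)

lemma diagm_mul: "(diagm g ** (X::real^'n::finite^'n)) $ i $ j = g i * X$i$j"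
  by (simp add: mm_entry diagm_entry ifmul ifmul2 ifconj0)

lemma h1: "(\<Sum>j\<in>UNIV. \<Sum>q\<in>UNIV. if p = (q::'b::finite) then f (j::'a::finite) q else (0::real)) = (\<Sum>j\<in>UNIV. f j p)"
  by (simp add: sum.delta sum.delta')
lemma h2: "(\<Sum>j\<in>UNIV. \<Sum>q\<in>UNIV. if i = (j::'a::finite) then f j (q::'b::finite) else (0::real)) = (\<Sum>q\<in>UNIV. f i q)"
  by (subst sum.swap) (simp add: sum.delta sum.delta')

lemma h3: "(\<Sum>j\<in>UNIV. \<Sum>q\<in>UNIV. if (j::'a::finite) = i then f j (q::'b::finite) else (0::real)) = (\<Sum>q\<in>UNIV. f i q)"
  by (subst sum.swap) (simp add: sum.delta sum.delta')

lemma vecm_entry: "vecm X $ (i,p) = X $ i $ p"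
  by (simp add: vecm_def)

definition unvec :: "real^('n::finite \<times> 'n) \<Rightarrow> real^'n^'n" where
  "unvec v = (\<chi> i p. v $ (i,p))"

lemma vecm_unvec[simp]: "vecm (unvec v) = v"
  by (simp add: vecm_def unvec_def vec_eq_iff)

lemma vecm_inj: "vecm X = vecm Y \<Longrightarrow> X = Y"
  by (metis vecm_entry vec_eq_iff)

lemma vecm_zero: "vecm 0 = 0"
  by (simp add: vecm_def vec_eq_iff)

lemma vecm_add: "vecm (X + Y) = vecm X + vecm Y"
  by (simp add: vecm_def vec_eq_iff)

lemma vecm_scale: "vecm (c *\<^sub>R X) = c *\<^sub>R vecm X"
  by (simp add: vecm_def vec_eq_iff)

lemma sum_pairs: "(\<Sum>jq\<in>UNIV. f jq) = (\<Sum>j\<in>UNIV. \<Sum>q\<in>UNIV. f (j,q))"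
  by (simp add: UNIV_Times_UNIV[symmetric] sum.cartesian_product del: UNIV_Times_UNIV)

lemma commut_vecm: "commut *v vecm X = vecm (transpose X)"
  apply (simp add: vec_eq_iff mv_entry sum_pairs commut_def vecm_entry transpose_def ifmul ifmul2 ifconj0)
  done

lemma commut_k_vec: "(commut_k k *v v) = (\<chi> i. v $ (i,k))"
  by (simp add: vec_eq_iff mv_entry commut_k_def ifmul)

lemma col_formula: "(\<chi> i. (Z *v vecm X) $ (i,k)) = (\<Sum>q\<in>UNIV. blk Z k q *v column q X)"
proof -
  have "(Z *v vecm X) $ (i,k) = (\<Sum>q\<in>UNIV. (blk Z k q *v column q X) $ i)" for i
  proof -
    have "(Z *v vecm X) $ (i,k) = (\<Sum>j\<in>UNIV. \<Sum>q\<in>UNIV. Z$(i,k)$(j,q) * X$j$q)"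
      by (simp add: mv_entry sum_pairs vecm_entry)
    also have "\<dots> = (\<Sum>q\<in>UNIV. \<Sum>j\<in>UNIV. Z$(i,k)$(j,q) * X$j$q)" by (rule sum.swap)
    also have "\<dots> = (\<Sum>q\<in>UNIV. (blk Z k q *v column q X) $ i)"
      by (simp add: mv_entry blk_def column_def)
    finally show ?thesis .
  qed
  then show ?thesis by (simp add: vec_eq_iff)
qed

lemma column_vecm: "column k W = (\<chi> i. vecm W $ (i,k))"
  by (simp add: column_def vecm_entry)

lemma transp_inner: "(transpose B *v x) \<bullet> y = x \<bullet> ((B::real^'n::finite^'m::finite) *v y)"
proof -
  have "(transpose B *v x) \<bullet> y = (\<Sum>i\<in>UNIV. \<Sum>l\<in>UNIV. B$l$i * x$l * y$i)"
    by (simp add: inner_vec_def mv_entry transpose_def sum_distrib_right)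
  also have "\<dots> = (\<Sum>l\<in>UNIV. \<Sum>i\<in>UNIV. B$l$i * x$l * y$i)" by (rule sum.swap)
  also have "\<dots> = x \<bullet> (B *v y)"
    by (simp add: inner_vec_def mv_entry sum_distrib_left mult_ac)
  finally show ?thesis .
qed

lemma sym_inner: assumes "transpose S = (S::real^'n::finite^'n)"
  shows "x \<bullet> (S *v y) = y \<bullet> (S *v x)"
  using transp_inner[of S y x] assms by (simp add: inner_commute)

lemma quad_opt:
  fixes A S :: "real^'n::finite^'n" and b :: "real^'n" and gk C :: real
  assumes symS: "transpose S = S"
    and psdA: "\<And>x. gk * ((A *v x) \<bullet> (S *v (A *v x))) \<le> x \<bullet> (A *v x)"
  defines "Q \<equiv> \<lambda>x. x \<bullet> (A *v x) - gk * ((A *v x) \<bullet> (S *v (A *v x)))"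
  defines "T \<equiv> A + transpose A - (2 * gk) *\<^sub>R (transpose A ** S ** A)"
  shows "(\<forall>d'. C + b \<bullet> d' - Q d' \<le> C + b \<bullet> d - Q d) \<longleftrightarrow> T *v d = b"
proof -
  have Qnn: "0 \<le> Q x" for x using psdA[of x] by (simp add: Q_def)
  have Tv: "(T *v d) \<bullet> h = h \<bullet> (A *v d) + d \<bullet> (A *v h) - 2 * gk * ((A *v d) \<bullet> (S *v (A *v h)))" for h
  proof -
    have "(T *v d) \<bullet> h = (A *v d) \<bullet> h + (transpose A *v d) \<bullet> h - (2 * gk) * ((transpose A *v (S *v (A *v d))) \<bullet> h)"
      by (simp add: T_def matrix_vector_mult_add_rdistrib matrix_vector_mult_diff_rdistrib
          scaleR_matrix_vector_assoc[symmetric] matrix_vector_mul_assoc matrix_mul_assoc inner_add_left inner_diff_left)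
    also have "\<dots> = h \<bullet> (A *v d) + d \<bullet> (A *v h) - 2 * gk * ((A *v d) \<bullet> (S *v (A *v h)))"
    proof -
      have t1: "(transpose A *v d) \<bullet> h = d \<bullet> (A *v h)" by (rule transp_inner)
      have t2: "(transpose A *v (S *v (A *v d))) \<bullet> h = (S *v (A *v d)) \<bullet> (A *v h)" by (rule transp_inner)
      have t3: "(S *v (A *v d)) \<bullet> (A *v h) = (A *v d) \<bullet> (S *v (A *v h))"
        using sym_inner[OF symS, of "A *v d" "A *v h"] by (simp add: inner_commute)
      show ?thesis by (simp only: t1 t2 t3 inner_commute[of "A *v d" h])
    qed
    finally show ?thesis .
  qed
  have Qadd: "Q (d + h) = Q d + Q h + (T *v d) \<bullet> h" for h
    unfolding Tv Q_def
    by (simp add: matrix_vector_right_distrib inner_add_left inner_add_right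
        sym_inner[OF symS, of "A *v h" "A *v d"] algebra_simps)
  have Qscale: "Q (t *\<^sub>R v) = t^2 * Q v" for t v
    by (simp add: Q_def matrix_vector_mult_scaleR power2_eq_square algebra_simps)
  show ?thesis
  proof
    assume opt: "\<forall>d'. C + b \<bullet> d' - Q d' \<le> C + b \<bullet> d - Q d"
    show "T *v d = b"
    proof (rule ccontr)
      assume ne: "T *v d \<noteq> b"
      define v where "v = b - T *v d"
      have vpos: "0 < v \<bullet> v" using ne by (simp add: v_def)
      define t where "t = (v \<bullet> v) / (Q v + 1)"
      have Qv: "0 \<le> Q v" by (rule Qnn)
      have tpos: "0 < t" using vpos Qv by (simp add: t_def)
      have "t * Q v < v \<bullet> v"
      proof -
        have "t * Q v = (v \<bullet> v) * (Q v / (Q v + 1))" by (simp add: t_def)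
        also have "\<dots> < (v \<bullet> v) * 1"
          using vpos Qv by (intro mult_strict_left_mono) auto
        finally show ?thesis by simp
      qed
      then have gain: "0 < t * (v \<bullet> v) - t^2 * Q v"
        using tpos by (simp add: power2_eq_square algebra_simps)
      have "C + b \<bullet> (d + t *\<^sub>R v) - Q (d + t *\<^sub>R v) = C + b \<bullet> d - Q d + (t * (v \<bullet> v) - t^2 * Q v)"
      proof -
        have q: "Q (d + t *\<^sub>R v) = Q d + t^2 * Q v + t * ((T *v d) \<bullet> v)"
          using Qadd[of "t *\<^sub>R v"] Qscale[of t v] by simp
        have vv: "b \<bullet> v - (T *v d) \<bullet> v = v \<bullet> v"
          by (simp add: v_def inner_diff_left[symmetric])
        show ?thesis using vv by (simp add: q inner_add_right algebra_simps)
      qed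
      with gain opt[rule_format, of "d + t *\<^sub>R v"] show False by linarith
    qed
  next
    assume Td: "T *v d = b"
    show "\<forall>d'. C + b \<bullet> d' - Q d' \<le> C + b \<bullet> d - Q d"
    proof
      fix d'
      have "Q d' = Q d + Q (d' - d) + b \<bullet> (d' - d)"
        using Qadd[of "d' - d"] Td by simp
      then show "C + b \<bullet> d' - Q d' \<le> C + b \<bullet> d - Q d"
        using Qnn[of "d' - d"] by (simp add: inner_diff_right)
    qed
  qed
qed

definition sqi :: "'a measure \<Rightarrow> ('a \<Rightarrow> real) \<Rightarrow> bool" where
  "sqi M f \<longleftrightarrow> f \<in> borel_measurable M \<and> integrable M (\<lambda>x. (f x)^2)"

lemma abs_prod_le: "\<bar>a * b\<bar> \<le> a^2 + (b::real)^2"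
proof -
  have "0 \<le> (\<bar>a\<bar> - \<bar>b\<bar>)^2" by simp
  then have "2 * (\<bar>a\<bar> * \<bar>b\<bar>) \<le> a^2 + b^2" by (simp add: power2_eq_square algebra_simps)
  moreover have "0 \<le> \<bar>a\<bar> * \<bar>b\<bar>" by simp
  ultimately have "\<bar>a\<bar> * \<bar>b\<bar> \<le> a^2 + b^2" by linarith
  then show ?thesis by (simp add: abs_mult)
qed

lemma sum_sq_le: "(a + b)^2 \<le> 2 * a^2 + 2 * (b::real)^2"
proof -
  have "0 \<le> (a - b)^2" by simp
  then show ?thesis by (simp add: power2_eq_square algebra_simps)
qed

lemma sqi_prod: assumes "sqi M f" "sqi M g" shows "integrable M (\<lambda>x. f x * g x)"
proof (rule Bochner_Integration.integrable_bound[of _ "\<lambda>x. (f x)^2 + (g x)^2"])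
  have m: "f \<in> borel_measurable M" "g \<in> borel_measurable M"
    and i: "integrable M (\<lambda>x. (f x)^2)" "integrable M (\<lambda>x. (g x)^2)" using assms by (auto simp: sqi_def)
  show "integrable M (\<lambda>x. (f x)^2 + (g x)^2)" using i by simp
  show "(\<lambda>x. f x * g x) \<in> borel_measurable M" using m by measurable
  show "AE x in M. norm (f x * g x) \<le> norm ((f x)^2 + (g x)^2)"
  proof (intro AE_I2)
    fix x
    have "\<bar>f x * g x\<bar> \<le> (f x)^2 + (g x)^2" by (rule abs_prod_le)
    then show "norm (f x * g x) \<le> norm ((f x)^2 + (g x)^2)" by simp
  qed
qed

lemma sqi_add: assumes "sqi M f" "sqi M g" shows "sqi M (\<lambda>x. f x + g x)"
proof -
  have m: "f \<in> borel_measurable M" "g \<in> borel_measurable M"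
    and i: "integrable M (\<lambda>x. (f x)^2)" "integrable M (\<lambda>x. (g x)^2)" using assms by (auto simp: sqi_def)
  have m2: "(\<lambda>x. f x + g x) \<in> borel_measurable M" using m by measurable
  have "integrable M (\<lambda>x. (f x + g x)^2)"
  proof (rule Bochner_Integration.integrable_bound[of _ "\<lambda>x. 2 * (f x)^2 + 2 * (g x)^2"])
    show "integrable M (\<lambda>x. 2 * (f x)^2 + 2 * (g x)^2)" using i by simp
    show "(\<lambda>x. (f x + g x)^2) \<in> borel_measurable M" using m by measurable
    show "AE x in M. norm ((f x + g x)^2) \<le> norm (2 * (f x)^2 + 2 * (g x)^2)"
    proof (intro AE_I2)
      fix x
      have "(f x + g x)^2 \<le> 2 * (f x)^2 + 2 * (g x)^2" by (rule sum_sq_le)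
      then show "norm ((f x + g x)^2) \<le> norm (2 * (f x)^2 + 2 * (g x)^2)" by simp
    qed
  qed
  then show ?thesis using m2 by (simp add: sqi_def)
qed

lemma sqi_cmul: assumes "sqi M f" shows "sqi M (\<lambda>x. c * f x)"
proof -
  have m: "f \<in> borel_measurable M" and i: "integrable M (\<lambda>x. (f x)^2)" using assms by (auto simp: sqi_def)
  have "(\<lambda>x. c * f x) \<in> borel_measurable M" using m by measurable
  then show ?thesis using i by (simp add: sqi_def power_mult_distrib)
qed

lemma sqi_const: "finite_measure M \<Longrightarrow> sqi M (\<lambda>x. c)"
  unfolding sqi_def by (simp add: finite_measure.integrable_const)

lemma sqi_sum: assumes fm: "finite_measure M" shows "finite I \<Longrightarrow> (\<And>i. i \<in> I \<Longrightarrow> sqi M (f i)) \<Longrightarrow> sqi M (\<lambda>x. \<Sum>i\<in>I. f i x)"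
proof (induction I rule: finite_induct)
  case empty
  then show ?case using sqi_const[OF fm, of 0] by simp
next
  case (insert a F)
  then show ?case by (simp add: sqi_add)
qed

lemma sqi_comp:
  fixes D :: "'a \<Rightarrow> real^'n::finite"
  assumes "integrable M D" "integrable M (\<lambda>x. (norm (D x))^2)"
  shows "sqi M (\<lambda>x. D x $ l)"
  unfolding sqi_def
proof
  have "integrable M (\<lambda>x. D x $ l)"
    by (rule integrable_bounded_linear[OF bounded_linear_vec_nth assms(1)])
  then show m: "(\<lambda>x. D x $ l) \<in> borel_measurable M" by (rule borel_measurable_integrable)
  show "integrable M (\<lambda>x. (D x $ l)^2)"
  proof (rule Bochner_Integration.integrable_bound[OF assms(2)])
    show "(\<lambda>x. (D x $ l)\<^sup>2) \<in> borel_measurable M" using m by measurable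
    show "AE x in M. norm ((D x $ l)\<^sup>2) \<le> norm ((norm (D x))\<^sup>2)"
    proof (intro AE_I2)
      fix x
      have "\<bar>D x $ l\<bar> \<le> norm (D x)" using component_le_norm_cart[of "D x" l] by simp
      from power_mono[OF this abs_ge_zero, of 2] have "(D x $ l)^2 \<le> (norm (D x))^2" by simp
      then show "norm ((D x $ l)\<^sup>2) \<le> norm ((norm (D x))\<^sup>2)" by simp
    qed
  qed
qed

lemma qf_expand: "x \<bullet> (S *v x) = (\<Sum>i\<in>UNIV. \<Sum>l\<in>UNIV. S$i$l * (x$i * x$l))"
  by (simp add: inner_vec_def mv_entry sum_distrib_left mult_ac)

lemma mv_sum: "(B::real^'n::finite^'m::finite) *v (\<Sum>i\<in>I. f i) = (\<Sum>i\<in>I. B *v f i)"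
proof (cases "finite I")
  case True then show ?thesis
    by (induction I rule: finite_induct) (simp_all add: matrix_vector_right_distrib)
qed simp

locale stab =
  fixes Sg :: "real^'n::finite^'n" and g :: "'n \<Rightarrow> real"
  assumes sym: "transpose Sg = Sg"
    and pd: "\<And>x. x \<noteq> 0 \<Longrightarrow> x \<bullet> (Sg *v x) > 0"
    and gpos: "\<And>i. g i > 0"
begin

lemma sym_entry: "Sg $ i $ j = Sg $ j $ i"
  using sym by (metis transpose_def vec_lambda_beta)

definition lyap :: "real^'n^'n \<Rightarrow> real^'n^'n" where
  "lyap X = Sg ** X ** diagm g + diagm g ** X ** Sg"

lemma lyap_entry: "lyap X $ i $ j = (\<Sum>l\<in>UNIV. Sg$i$l * X$l$j) * g j + g i * (\<Sum>l\<in>UNIV. X$i$l * Sg$l$j)"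
  by (simp add: lyap_def mul_diagm diagm_mul mm_entry[of "diagm g ** X"] mm_entry[of Sg X] sum_distrib_left mult_ac)

lemma K_vecm: "Kmat Sg g *v vecm X = vecm (lyap X)"
proof -
  have "(Kmat Sg g *v vecm X) $ (i,p) = vecm (lyap X) $ (i,p)" for i p
    apply (simp add: mv_entry sum_pairs Kmat_def kron_def vecm_entry lyap_entry diagm_entry
        distrib_right sum.distrib ifmul ifmul2 h1 h2)
    apply (simp add: sum_distrib_left sum_distrib_right mult_ac sym_entry)
    done
  then show ?thesis by (simp add: vec_eq_iff)
qed


lemma qf_nonneg: "0 \<le> x \<bullet> (Sg *v x)"
  using pd[of x] by (cases "x = 0") auto

lemma frob: "(\<Sum>i\<in>UNIV. \<Sum>j\<in>UNIV. X$i$j * lyap X$i$j) =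
   (\<Sum>j\<in>UNIV. g j * (column j X \<bullet> (Sg *v column j X))) + (\<Sum>i\<in>UNIV. g i * (row i X \<bullet> (Sg *v row i X)))"
proof -
  have A: "(\<Sum>i\<in>UNIV. \<Sum>j\<in>UNIV. X$i$j * ((\<Sum>l\<in>UNIV. Sg$i$l * X$l$j) * g j))
     = (\<Sum>j\<in>UNIV. \<Sum>i\<in>UNIV. X$i$j * ((\<Sum>l\<in>UNIV. Sg$i$l * X$l$j) * g j))" by (rule sum.swap)
  also have "\<dots> = (\<Sum>j\<in>UNIV. g j * (column j X \<bullet> (Sg *v column j X)))"
    by (simp add: inner_vec_def column_def mv_entry sum_distrib_left mult_ac)
  finally have A': "(\<Sum>i\<in>UNIV. \<Sum>j\<in>UNIV. X$i$j * ((\<Sum>l\<in>UNIV. Sg$i$l * X$l$j) * g j))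
     = (\<Sum>j\<in>UNIV. g j * (column j X \<bullet> (Sg *v column j X)))" .
  have B: "(\<Sum>i\<in>UNIV. \<Sum>j\<in>UNIV. X$i$j * (g i * (\<Sum>l\<in>UNIV. X$i$l * Sg$l$j)))
     = (\<Sum>i\<in>UNIV. g i * (row i X \<bullet> (Sg *v row i X)))"
    by (simp add: inner_vec_def row_def mv_entry sum_distrib_left mult_ac sym_entry)
  show ?thesis
    by (simp add: lyap_entry distrib_left sum.distrib A' B)
qed

lemma lyap_zero: assumes "lyap X = 0" shows "X = 0"
proof -
  have "(\<Sum>j\<in>UNIV. g j * (column j X \<bullet> (Sg *v column j X))) + (\<Sum>i\<in>UNIV. g i * (row i X \<bullet> (Sg *v row i X))) = 0"
    using frob[of X] assms by simp
  moreover have n1: "0 \<le> (\<Sum>j\<in>UNIV. g j * (column j X \<bullet> (Sg *v column j X)))"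
    by (intro sum_nonneg mult_nonneg_nonneg less_imp_le[OF gpos] qf_nonneg)
  moreover have n2: "0 \<le> (\<Sum>i\<in>UNIV. g i * (row i X \<bullet> (Sg *v row i X)))"
    by (intro sum_nonneg mult_nonneg_nonneg less_imp_le[OF gpos] qf_nonneg)
  ultimately have "(\<Sum>j\<in>UNIV. g j * (column j X \<bullet> (Sg *v column j X))) = 0" by linarith
  then have Z: "\<forall>j\<in>UNIV. g j * (column j X \<bullet> (Sg *v column j X)) = 0"
    by (subst (asm) sum_nonneg_eq_0_iff) (auto intro!: mult_nonneg_nonneg less_imp_le[OF gpos] qf_nonneg)
  have q0: "column j X \<bullet> (Sg *v column j X) = 0" for j
  proof -
    have "g j * (column j X \<bullet> (Sg *v column j X)) = 0" using Z by simp
    then show ?thesis using gpos[of j] by simp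
  qed
  have "column j X = 0" for j
    using pd[of "column j X"] q0[of j] by fastforce
  then show ?thesis
    by (simp add: vec_eq_iff column_def)
qed

lemma lyap_diff: "lyap (X - Y) = lyap X - lyap Y"
  by (simp add: vec_eq_iff lyap_entry algebra_simps sum_subtractf)

lemma lyap_inj: "lyap X = lyap Y \<Longrightarrow> X = Y"
  using lyap_zero[of "X - Y"] by (simp add: lyap_diff)

lemma lyap_transpose: "transpose (lyap X) = lyap (transpose X)"
  by (simp add: vec_eq_iff lyap_entry transpose_def mult_ac sym_entry)

lemma K_invertible: "invertible (Kmat Sg g)"
proof -
  have "\<forall>x. Kmat Sg g *v x = 0 \<longrightarrow> x = 0"
  proof (intro allI impI)
    fix x assume "Kmat Sg g *v x = 0"
    then have "vecm (lyap (unvec x)) = vecm 0"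
      using K_vecm[of "unvec x"] by (simp add: vecm_zero)
    then have "unvec x = 0" using vecm_inj lyap_zero by blast
    then show "x = 0" by (metis vecm_unvec vecm_zero)
  qed
  then show ?thesis
    using invertible_left_inverse matrix_left_invertible_ker by blast
qed

lemma Kinv_l: "matrix_inv (Kmat Sg g) ** Kmat Sg g = mat 1"
  and Kinv_r: "Kmat Sg g ** matrix_inv (Kmat Sg g) = mat 1"
  using K_invertible someI_ex[of "\<lambda>A'. Kmat Sg g ** A' = mat 1 \<and> A' ** Kmat Sg g = mat 1"]
  unfolding invertible_def matrix_inv_def by auto


definition Wsol :: "real^'n^'n \<Rightarrow> real^'n^'n" where
  "Wsol M' = unvec (matrix_inv (Kmat Sg g) *v ((1/2) *\<^sub>R vecm (M' + transpose M')))"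

lemma vecm_Wsol: "vecm (Wsol M') = matrix_inv (Kmat Sg g) *v ((1/2) *\<^sub>R vecm (M' + transpose M'))"
  by (simp add: Wsol_def)

lemma lyap_Wsol: "lyap (Wsol M') = (1/2) *\<^sub>R (M' + transpose M')"
proof -
  have "vecm (lyap (Wsol M')) = Kmat Sg g *v vecm (Wsol M')" by (simp add: K_vecm)
  also have "\<dots> = (1/2) *\<^sub>R vecm (M' + transpose M')"
    by (simp add: vecm_Wsol matrix_vector_mul_assoc Kinv_r)
  also have "\<dots> = vecm ((1/2) *\<^sub>R (M' + transpose M'))" by (simp add: vecm_scale)
  finally show ?thesis by (rule vecm_inj)
qed

lemma Wsol_sym: "transpose (Wsol M') = Wsol M'"
proof -
  have "lyap (transpose (Wsol M')) = transpose (lyap (Wsol M'))"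
    by (simp only: lyap_transpose)
  also have "\<dots> = lyap (Wsol M')"
    by (simp add: lyap_Wsol transpose_def vec_eq_iff add.commute)
  finally have "lyap (transpose (Wsol M')) = lyap (Wsol M')" .
  then show ?thesis by (rule lyap_inj)
qed

lemma sWg_entry: "(Sg ** W ** diagm g) $ i $ j = (\<Sum>l\<in>UNIV. Sg$i$l * W$l$j) * g j"
  by (simp only: mul_diagm mm_entry[of Sg W])

lemma symsum: assumes "transpose W = W"
  shows "(\<Sum>l\<in>UNIV. W$i$l * Sg$l$j) = (\<Sum>l\<in>UNIV. Sg$j$l * W$l$i)"
proof -
  have "W$i$l = W$l$i" for l
  proof -
    have "transpose W $ l $ i = W $ l $ i" using assms by simp
    then show ?thesis by (simp add: transpose_def)
  qed
  then show ?thesis by (simp add: sym_entry mult.commute)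
qed


lemma stable_eq: "stable_point Sg g M' = (Wsol M', M' - 2 *\<^sub>R (Sg ** Wsol M' ** diagm g))"
proof -
  let ?W = "Wsol M'"
  let ?Q = "\<lambda>(W, P). transpose W = W \<and> transpose P = - P \<and> M' - P = 2 *\<^sub>R (Sg ** W ** diagm g)"
  have L: "(\<Sum>l\<in>UNIV. Sg$i$l * ?W$l$j) * g j + g i * (\<Sum>l\<in>UNIV. Sg$j$l * ?W$l$i) = (M'$i$j + M'$j$i)/2" for i j
    using arg_cong[OF lyap_Wsol[of M'], of "\<lambda>X. X$i$j"]
    by (simp add: lyap_entry symsum[OF Wsol_sym] transpose_def)
  have "?Q (?W, M' - 2 *\<^sub>R (Sg ** ?W ** diagm g))"
  proof -
    have "transpose (M' - 2 *\<^sub>R (Sg ** ?W ** diagm g)) = - (M' - 2 *\<^sub>R (Sg ** ?W ** diagm g))"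
    proof (simp add: vec_eq_iff transpose_def sWg_entry, intro allI)
      fix i j
      show "M' $ j $ i - 2 * ((\<Sum>l\<in>UNIV. Sg $ j $ l * ?W $ l $ i) * g i) =
            2 * ((\<Sum>l\<in>UNIV. Sg $ i $ l * ?W $ l $ j) * g j) - M' $ i $ j"
        using L[of i j] by (simp add: algebra_simps)
    qed
    then show ?thesis using Wsol_sym by simp
  qed
  moreover have "x = (?W, M' - 2 *\<^sub>R (Sg ** ?W ** diagm g))" if "?Q x" for x
  proof -
    obtain W P where x: "x = (W, P)" by (cases x)
    with that have W: "transpose W = W" and P: "transpose P = - P"
      and E: "M' - P = 2 *\<^sub>R (Sg ** W ** diagm g)" by auto
    have Pij: "P$j$i = - P$i$j" for i j
    proof -
      have "transpose P $ i $ j = (- P) $ i $ j" using P by simp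
      then show ?thesis by (simp add: transpose_def)
    qed
    have Ee: "M'$i$j - P$i$j = 2 * ((\<Sum>l\<in>UNIV. Sg$i$l * W$l$j) * g j)" for i j
      using arg_cong[OF E, of "\<lambda>X. X$i$j"] by (simp add: sWg_entry)
    have "lyap W = lyap ?W"
    proof (simp add: vec_eq_iff, intro allI)
      fix i j
      have a: "lyap W $ i $ j = (\<Sum>l\<in>UNIV. Sg$i$l * W$l$j) * g j + g i * (\<Sum>l\<in>UNIV. Sg$j$l * W$l$i)"
        by (simp only: lyap_entry symsum[OF W])
      have b: "lyap ?W $ i $ j = (M'$i$j + M'$j$i)/2"
        by (simp add: lyap_Wsol transpose_def)
      show "lyap W $ i $ j = lyap ?W $ i $ j"
        unfolding a b using Ee[of i j] Ee[of j i] Pij[of i j] by (simp add: mult.commute)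
    qed
    then have "W = ?W" by (rule lyap_inj)
    moreover have "P = M' - 2 *\<^sub>R (Sg ** W ** diagm g)" using E by (simp add: algebra_simps)
    ultimately show ?thesis using x by simp
  qed
  ultimately show ?thesis
    unfolding stable_point_def by (rule the_equality)
qed


lemma L_vecm: "Lmat Sg g *v vecm M' = vecm (Wsol M')"
  by (simp add: vecm_Wsol Lmat_def scaleR_matrix_vector_assoc[symmetric] matrix_vector_mult_add_rdistrib
      matrix_vector_mul_assoc[symmetric] commut_vecm vecm_add matrix_vector_mult_scaleR matrix_vector_right_distrib)

lemma col_Wsol: "column k (Wsol M') = (\<Sum>q\<in>UNIV. blk (Lmat Sg g) k q *v column q M')"
  by (simp add: column_vecm L_vecm[symmetric] col_formula)


lemma col_dev: "column q (devmat S k D d \<omega>) = (if q = k then d else if q \<in> S then D q \<omega> else 0)"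
  by (simp add: devmat_def column_def vec_eq_iff)

lemma column_add: "column q (X + Y) = column q X + column q (Y::real^'n^'n)"
  by (simp add: column_def vec_eq_iff)

lemma wk: assumes "k \<in> S"
  shows "column k (Wsol (M + devmat S k D d \<omega>)) = column k (Wsol M) + blk (Lmat Sg g) k k *v d
     + (\<Sum>q\<in>S - {k}. blk (Lmat Sg g) k q *v D q \<omega>)"
proof -
  let ?L = "\<lambda>q. blk (Lmat Sg g) k q"
  have "column k (Wsol (M + devmat S k D d \<omega>)) = (\<Sum>q\<in>UNIV. ?L q *v column q M + ?L q *v (if q = k then d else if q \<in> S then D q \<omega> else 0))"
    by (simp add: col_Wsol column_add col_dev matrix_vector_right_distrib)
  also have "\<dots> = column k (Wsol M) + (\<Sum>q\<in>UNIV. ?L q *v (if q = k then d else if q \<in> S then D q \<omega> else 0))"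
    by (simp add: sum.distrib col_Wsol)
  also have "(\<Sum>q\<in>UNIV. ?L q *v (if q = k then d else if q \<in> S then D q \<omega> else 0))
      = ?L k *v d + (\<Sum>q\<in>UNIV - {k}. ?L q *v (if q = k then d else if q \<in> S then D q \<omega> else 0))"
    by (simp add: sum.remove[of UNIV k])
  also have "(\<Sum>q\<in>UNIV - {k}. ?L q *v (if q = k then d else if q \<in> S then D q \<omega> else 0))
      = (\<Sum>q\<in>UNIV - {k}. if q \<in> S then ?L q *v D q \<omega> else 0)"
    by (rule sum.cong) auto
  also have "\<dots> = (\<Sum>q\<in>(UNIV - {k}) \<inter> S. ?L q *v D q \<omega>)"
    by (rule sum.inter_restrict[symmetric]) simp
  also have "(UNIV - {k}) \<inter> S = S - {k}" by auto
  finally show ?thesis by (simp add: add.assoc)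
qed

lemma utility_eq:
  assumes "column k M' = column k M + d"
  shows "utility Sg g M k (stable_point Sg g M') =
    g k * (column k (Wsol M') \<bullet> (Sg *v column k (Wsol M'))) - column k (Wsol M') \<bullet> d"
proof -
  let ?W = "Wsol M'"
  let ?w = "column k ?W"
  have E: "column k M - column k (M' - 2 *\<^sub>R (Sg ** ?W ** diagm g)) = (2 * g k) *\<^sub>R (Sg *v ?w) - d"
  proof -
    have "column k (M' - 2 *\<^sub>R (Sg ** ?W ** diagm g)) = column k M' - (2 * g k) *\<^sub>R (Sg *v ?w)"
      by (simp add: vec_eq_iff column_def sWg_entry mv_entry)
    then show ?thesis using assms by simp
  qed
  show ?thesis
    unfolding utility_def stable_eq Let_def fst_conv snd_conv E
    by (simp add: inner_diff_right)
qed


lemma psd: "g k * ((blk (Lmat Sg g) k k *v x) \<bullet> (Sg *v (blk (Lmat Sg g) k k *v x))) \<le> x \<bullet> (blk (Lmat Sg g) k k *v x)"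
proof -
  define E :: "real^'n^'n" where "E = (\<chi> r i. if i = k then x$r else 0)"
  define W where "W = Wsol E"
  let ?L = "\<lambda>q. blk (Lmat Sg g) k q"
  have colE: "column q E = (if q = k then x else 0)" for q
    by (simp add: column_def vec_eq_iff E_def)
  have "column k W = (\<Sum>q\<in>UNIV. ?L q *v (if q = k then x else 0))"
    by (simp add: W_def col_Wsol colE)
  also have "\<dots> = (\<Sum>q\<in>UNIV. if q = k then ?L q *v x else 0)"
    by (rule sum.cong) auto
  also have "\<dots> = ?L k *v x" by (simp add: sum.delta)
  finally have wA: "?L k *v x = column k W" by simp
  have Ws: "transpose W = W" by (simp add: W_def Wsol_sym)
  have Wij: "W$i$j = W$j$i" for i j
  proof -
    have "transpose W $ j $ i = W $ j $ i" using Ws by simp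
    then show ?thesis by (simp add: transpose_def)
  qed
  have rowW: "row i W = column i W" for i
    using row_transpose[of i W] Ws by simp
  have ly: "lyap W $ i $ j = ((if j = k then x$i else 0) + (if i = k then x$j else 0)) / 2" for i j
    by (simp add: W_def lyap_Wsol E_def transpose_def)
  have s1: "(\<Sum>i\<in>UNIV. \<Sum>j\<in>UNIV. W$i$j * (if j = k then x$i else 0)) = column k W \<bullet> x"
    by (simp add: ifmul2 sum.delta inner_vec_def column_def)
  have s2: "(\<Sum>i\<in>UNIV. \<Sum>j\<in>UNIV. W$i$j * (if i = k then x$j else 0)) = column k W \<bullet> x"
    by (simp add: ifmul2 h3 inner_vec_def column_def Wij[of k])
  have "(\<Sum>i\<in>UNIV. \<Sum>j\<in>UNIV. W$i$j * lyap W$i$j) =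
     ((\<Sum>i\<in>UNIV. \<Sum>j\<in>UNIV. W$i$j * (if j = k then x$i else 0)) + (\<Sum>i\<in>UNIV. \<Sum>j\<in>UNIV. W$i$j * (if i = k then x$j else 0))) / 2"
    by (simp only: ly distrib_left add_divide_distrib sum.distrib sum_divide_distrib times_divide_eq_right)
  then have "(\<Sum>i\<in>UNIV. \<Sum>j\<in>UNIV. W$i$j * lyap W$i$j) = column k W \<bullet> x"
    by (simp add: s1 s2)
  then have eq: "column k W \<bullet> x = 2 * (\<Sum>j\<in>UNIV. g j * (column j W \<bullet> (Sg *v column j W)))"
    using frob[of W] by (simp add: rowW)
  have "g k * (column k W \<bullet> (Sg *v column k W)) \<le> (\<Sum>j\<in>UNIV. g j * (column j W \<bullet> (Sg *v column j W)))"
    by (rule member_le_sum) (auto intro!: mult_nonneg_nonneg less_imp_le[OF gpos] qf_nonneg)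
  moreover have "0 \<le> g k * (column k W \<bullet> (Sg *v column k W))"
    by (intro mult_nonneg_nonneg less_imp_le[OF gpos] qf_nonneg)
  ultimately have "g k * (column k W \<bullet> (Sg *v column k W)) \<le> column k W \<bullet> x"
    using eq by linarith
  then show ?thesis by (simp add: wA inner_commute)
qed


lemma u_expand: "gk * ((x + y) \<bullet> (Sg *v (x + y))) - (x + y) \<bullet> d =
   gk * (x \<bullet> (Sg *v x)) + x \<bullet> ((2 * gk) *\<^sub>R (Sg *v y) - d) + (gk * (y \<bullet> (Sg *v y)) - y \<bullet> d)"
  using sym_inner[OF sym, of y x]
  by (simp add: matrix_vector_right_distrib inner_add_left inner_add_right inner_diff_right algebra_simps)

end

theorem mainTheorem6:
  fixes \<Omega> :: "'a measure"
    and \<Sigma> M :: "real^'n^'n::finite"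
    and \<gamma> :: "'n \<Rightarrow> real"
    and S :: "'n set" and k :: 'n
    and D :: "'n \<Rightarrow> 'a \<Rightarrow> real^'n"
  assumes "prob_space \<Omega>"
    and "transpose \<Sigma> = \<Sigma>"
    and "\<And>x. x \<noteq> 0 \<Longrightarrow> x \<bullet> (\<Sigma> *v x) > 0"
    and "\<And>i. \<gamma> i > 0"
    and "k \<in> S"
    and "\<And>j. j \<in> S - {k} \<Longrightarrow> integrable \<Omega> (D j)"
    and "\<And>j. j \<in> S - {k} \<Longrightarrow> integrable \<Omega> (\<lambda>\<omega>. (norm (D j \<omega>))\<^sup>2)"
  shows "(\<forall>d'. expected_utility \<Omega> \<Sigma> \<gamma> M S k D d' \<le> expected_utility \<Omega> \<Sigma> \<gamma> M S k D d)
     \<longleftrightarrow> Tblk \<Sigma> \<gamma> k k *v d + (\<Sum>j\<in>S - {k}. Tblk \<Sigma> \<gamma> k j *v integral\<^sup>L \<Omega> (D j))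
           = yvec \<Sigma> \<gamma> M k"
proof -
  interpret stab \<Sigma> \<gamma> using assms(2-4) by unfold_locales auto
  interpret P: prob_space \<Omega> by (rule assms(1))
  define L where "L = blk (Lmat \<Sigma> \<gamma>) k"
  define A where "A = L k"
  define c where "c = column k (Wsol M)"
  define a where "a = (\<lambda>\<omega>. c + (\<Sum>q\<in>S-{k}. L q *v D q \<omega>))"
  define gk where "gk = \<gamma> k"
  have u: "utility \<Sigma> \<gamma> M k (stable_point \<Sigma> \<gamma> (M + devmat S k D d \<omega>)) =
     gk * ((a \<omega> + A *v d) \<bullet> (\<Sigma> *v (a \<omega> + A *v d))) - (a \<omega> + A *v d) \<bullet> d" for d \<omega>
  proof -
    have cc: "column k (M + devmat S k D d \<omega>) = column k M + d" by (simp add: column_add col_dev)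
    have w: "column k (Wsol (M + devmat S k D d \<omega>)) = a \<omega> + A *v d"
      by (simp add: wk[OF assms(5)] a_def A_def L_def c_def add_ac)
    show ?thesis
      using utility_eq[OF cc] by (simp only: w gk_def)
  qed
  have iLD: "integrable \<Omega> (\<lambda>\<omega>. L q *v D q \<omega>)" if "q \<in> S-{k}" for q
    using integrable_bounded_linear[OF matrix_vector_mul_bounded_linear assms(6)[OF that], of "L q"] by simp
  have iS: "integrable \<Omega> (\<lambda>\<omega>. \<Sum>q\<in>S-{k}. L q *v D q \<omega>)"
    using iLD by (rule Bochner_Integration.integrable_sum)
  have ia: "integrable \<Omega> a"
    unfolding a_def using iS P.integrable_const[of c] by (rule Bochner_Integration.integrable_add[rotated])
  have sa: "sqi \<Omega> (\<lambda>\<omega>. a \<omega> $ i)" for i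
  proof -
    have eq: "(\<lambda>\<omega>. a \<omega> $ i) = (\<lambda>\<omega>. c$i + (\<Sum>q\<in>S-{k}. \<Sum>l\<in>UNIV. L q$i$l * D q \<omega> $ l))"
      by (simp add: a_def mv_entry)
    have "sqi \<Omega> (\<lambda>\<omega>. c$i + (\<Sum>q\<in>S-{k}. \<Sum>l\<in>UNIV. L q$i$l * D q \<omega> $ l))"
      by (intro sqi_add sqi_const sqi_sum sqi_cmul sqi_comp P.finite_measure finite assms(6,7))
    then show ?thesis unfolding eq .
  qed
  have iq: "integrable \<Omega> (\<lambda>\<omega>. a \<omega> \<bullet> (\<Sigma> *v a \<omega>))"
    unfolding qf_expand
    by (intro Bochner_Integration.integrable_sum integrable_mult_right sqi_prod sa)
  define abar where "abar = integral\<^sup>L \<Omega> a"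
  define B where "B = (2 * gk) *\<^sub>R (transpose A ** \<Sigma>) - mat 1"
  define b where "b = B *v abar"
  define C where "C = integral\<^sup>L \<Omega> (\<lambda>\<omega>. gk * (a \<omega> \<bullet> (\<Sigma> *v a \<omega>)))"
  have bd: "abar \<bullet> ((2 * gk) *\<^sub>R (\<Sigma> *v (A *v d)) - d) = b \<bullet> d" for d
  proof -
    have t: "(transpose A *v (\<Sigma> *v abar)) \<bullet> d = (\<Sigma> *v abar) \<bullet> (A *v d)" by (rule transp_inner)
    have s: "(\<Sigma> *v abar) \<bullet> (A *v d) = abar \<bullet> (\<Sigma> *v (A *v d))"
      using sym_inner[OF sym, of "A *v d" abar] by (simp add: inner_commute)
    have "b \<bullet> d = (2 * gk) * ((transpose A *v (\<Sigma> *v abar)) \<bullet> d) - abar \<bullet> d"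
      by (simp add: b_def B_def matrix_vector_mult_diff_rdistrib scaleR_matrix_vector_assoc[symmetric]
          matrix_vector_mul_assoc[symmetric] inner_diff_left)
    then show ?thesis using t s by (simp add: inner_diff_right)
  qed
  have EU: "expected_utility \<Omega> \<Sigma> \<gamma> M S k D d = C + b \<bullet> d - (d \<bullet> (A *v d) - gk * ((A *v d) \<bullet> (\<Sigma> *v (A *v d))))" for d
  proof -
    have i1: "integrable \<Omega> (\<lambda>\<omega>. gk * (a \<omega> \<bullet> (\<Sigma> *v a \<omega>)))" using iq by simp
    have i2: "integrable \<Omega> (\<lambda>\<omega>. a \<omega> \<bullet> ((2 * gk) *\<^sub>R (\<Sigma> *v (A *v d)) - d))" using ia by simp
    have "expected_utility \<Omega> \<Sigma> \<gamma> M S k D d = integral\<^sup>L \<Omega> (\<lambda>\<omega>. gk * (a \<omega> \<bullet> (\<Sigma> *v a \<omega>))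
       + a \<omega> \<bullet> ((2 * gk) *\<^sub>R (\<Sigma> *v (A *v d)) - d) + (gk * ((A *v d) \<bullet> (\<Sigma> *v (A *v d))) - (A *v d) \<bullet> d))"
      unfolding expected_utility_def u u_expand ..
    also have "\<dots> = C + abar \<bullet> ((2 * gk) *\<^sub>R (\<Sigma> *v (A *v d)) - d) + (gk * ((A *v d) \<bullet> (\<Sigma> *v (A *v d))) - (A *v d) \<bullet> d)"
      using i1 i2 ia by (simp add: Bochner_Integration.integral_add Bochner_Integration.integral_inner_left C_def abar_def P.prob_space)
    finally show ?thesis by (simp add: bd inner_commute)
  qed
  have psdA: "gk * ((A *v x) \<bullet> (\<Sigma> *v (A *v x))) \<le> x \<bullet> (A *v x)" for x
    using psd[of k x] by (simp add: A_def L_def gk_def)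
  have opt: "(\<forall>d'. expected_utility \<Omega> \<Sigma> \<gamma> M S k D d' \<le> expected_utility \<Omega> \<Sigma> \<gamma> M S k D d)
      \<longleftrightarrow> (A + transpose A - (2 * gk) *\<^sub>R (transpose A ** \<Sigma> ** A)) *v d = b"
    unfolding EU using quad_opt[OF sym psdA, of C b d] by simp
  have Tkk: "Tblk \<Sigma> \<gamma> k k = A + transpose A - (2 * gk) *\<^sub>R (transpose A ** \<Sigma> ** A)"
    by (simp add: Tblk_def Let_def A_def L_def gk_def)
  have Tkj: "Tblk \<Sigma> \<gamma> k j *v v = - (B *v (L j *v v))" if "j \<in> S - {k}" for j v
  proof -
    have "Tblk \<Sigma> \<gamma> k j = (mat 1 - (2 * gk) *\<^sub>R (transpose A ** \<Sigma>)) ** L j"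
      using that by (simp add: Tblk_def Let_def A_def L_def gk_def)
    then show ?thesis
      by (simp add: B_def matrix_vector_mul_assoc[symmetric] matrix_vector_mult_diff_rdistrib)
  qed
  have yv: "yvec \<Sigma> \<gamma> M k = B *v c"
  proof -
    have "c = commut_k k *v (matrix_inv (Kmat \<Sigma> \<gamma>) *v ((1/2) *\<^sub>R vecm (M + transpose M)))"
      by (simp add: c_def column_vecm commut_k_vec vecm_Wsol)
    then show ?thesis
      by (simp add: yvec_def Let_def B_def A_def L_def gk_def matrix_vector_mult_scaleR)
  qed
  have iDj: "integral\<^sup>L \<Omega> (\<lambda>\<omega>. L q *v D q \<omega>) = L q *v integral\<^sup>L \<Omega> (D q)" if "q \<in> S - {k}" for q
    by (rule integral_bounded_linear[OF matrix_vector_mul_bounded_linear assms(6)[OF that]])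
  have ab: "abar = c + (\<Sum>q\<in>S-{k}. L q *v integral\<^sup>L \<Omega> (D q))"
  proof -
    have "abar = c + integral\<^sup>L \<Omega> (\<lambda>\<omega>. \<Sum>q\<in>S-{k}. L q *v D q \<omega>)"
      unfolding abar_def a_def using iS by (simp add: Bochner_Integration.integral_add P.prob_space)
    also have "integral\<^sup>L \<Omega> (\<lambda>\<omega>. \<Sum>q\<in>S-{k}. L q *v D q \<omega>) = (\<Sum>q\<in>S-{k}. L q *v integral\<^sup>L \<Omega> (D q))"
      using iLD iDj by (simp add: Bochner_Integration.integral_sum)
    finally show ?thesis .
  qed
  have sT: "(\<Sum>j\<in>S - {k}. Tblk \<Sigma> \<gamma> k j *v integral\<^sup>L \<Omega> (D j)) = - (B *v (\<Sum>q\<in>S-{k}. L q *v integral\<^sup>L \<Omega> (D q)))"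
    by (simp add: Tkj mv_sum sum_negf)
  have bb: "b = B *v c + B *v (\<Sum>q\<in>S-{k}. L q *v integral\<^sup>L \<Omega> (D q))"
    by (simp add: b_def ab matrix_vector_right_distrib)
  show ?thesis
    unfolding opt Tkk[symmetric] sT yv bb
    by (simp add: diff_eq_eq)
qed

end
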